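(* Let $\mathcal{A}$ be a strongly tight GFG-NRW whose language is recognized by some GFG-NBW. Then every state $q$ of $\mathcal{A}$ that appears in some good set of the acceptance condition does not belong to a rejecting cycle of $\mathcal{A}$.
   Context: An automaton $\langle\Sigma,Q,Q_0,\delta,\alpha\rangle$ has $\delta:Q\times\Sigma\to2^Q$; runs are accepting if the set of infinitely visited states satisfies $\alpha$. Rabin ($\alpha$ a set of pairs $\langle E,F\rangle$, $E$ the bad set, $F$ the good set): a set $S$ is accepting iff some pair has $S\cap E=\emptyset$ and $S\cap F\neq\emptyset$. A cycle of $\mathcal{A}$ is a sequence $q_0,\ldots,q_k$ with $q_0=q_k$ and $q_{i+1}\in\delta(q_i,a_i)$ for some letters $a_i$; it is rejecting if its set of states is not accepting. NRW/NBW: nondeterministic Rabin/Büchi word automaton. $\mathcal{A}$ is GFG if there is a strategy $g:\Sigma^*\to Q$ such that for every $w=a_1a_2\cdots$, $g(\epsilon),g(a_1),g(a_1a_2),\ldots$ is a run on $w$, accepting whenever $w\in L(\mathcal{A})$. Finite-state strategies are transducers $g=\langle\Sigma,Q,M,m_0,\rho,\tau\rangle$ (finite memories $M$, $\rho:M\times\Sigma\to M$ extended to words from $m_0$, $\tau:M\to Q$, $g(u)=\tau(\rho(u))$); $m$ is a memory of $q$ if $\tau(m)=q$. $\mathcal{A}_g=\langle\Sigma,M,m_0,\rho,\alpha_g\rangle$ where $\alpha_g$ replaces each set $F$ in $\alpha$ by $\{m\mid\tau(m)\in F\}$. A transition $\langle q,a,q'\rangle$ is used by $g$ if $q=g(u)$,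 $q'=g(ua)$ for some $u$. A combination of paths from a set $P$ of paths is the union of the element sets of a nonempty subset of $P$. For memories $m\neq m'$ with $\tau(m)=\tau(m')$, $m$ is replaceable by $m'$ if the set of paths of $\mathcal{A}_g$ from $m'$ to $m$ is empty or all its combinations are accepting. $\mathcal{A}$ is tight w.r.t. a finite-state strategy $g$ witnessing its GFGness if every transition is used by $g$ and no memory is replaceable by a different memory of the same state. A path of $\mathcal{A}_g$ is $q$-exclusive accepting if its memory set is accepting but that set minus the memories of $q$ is not. $\mathcal{A}$ is strongly tight if for some such $g$ it is tight w.r.t. $g$ and every state $q$ in some good set has a $q$-exclusive accepting cycle in $\mathcal{A}_g$. *)

theory Defs
  imports Main
begin

record ('a, 'q, 'c) automaton =
  alphabet :: "'a set"
  states   :: "'q set"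
  initial  :: "'q set"
  delta    :: "'q \<Rightarrow> 'a \<Rightarrow> 'q set"
  acc      :: 'c

text \<open>Rabin condition: set of pairs (E, F), E bad, F good. Buechi condition: set F.\<close>
type_synonym ('a, 'q) nrw = "('a, 'q, ('q set \<times> 'q set) set) automaton"
type_synonym ('a, 'q) nbw = "('a, 'q, 'q set) automaton"

definition wf_aut :: "('a, 'q, 'c) automaton \<Rightarrow> bool" where
  "wf_aut A \<longleftrightarrow> finite (alphabet A) \<and> finite (states A) \<and> initial A \<subseteq> states A \<and>
     (\<forall>q\<in>states A. \<forall>a\<in>alphabet A. delta A q a \<subseteq> states A)"

definition rabin_accepting :: "('s set \<times> 's set) set \<Rightarrow> 's set \<Rightarrow> bool" where
  "rabin_accepting \<alpha> S \<longleftrightarrow> (\<exists>(E, F)\<in>\<alpha>. S \<inter> E = {} \<and> S \<inter> F \<noteq> {})"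

definition buchi_accepting :: "'s set \<Rightarrow> 's set \<Rightarrow> bool" where
  "buchi_accepting F S \<longleftrightarrow> S \<inter> F \<noteq> {}"

definition is_word :: "('a, 'q, 'c) automaton \<Rightarrow> (nat \<Rightarrow> 'a) \<Rightarrow> bool" where
  "is_word A w \<longleftrightarrow> (\<forall>i. w i \<in> alphabet A)"

definition is_run :: "('a, 'q, 'c) automaton \<Rightarrow> (nat \<Rightarrow> 'a) \<Rightarrow> (nat \<Rightarrow> 'q) \<Rightarrow> bool" where
  "is_run A w r \<longleftrightarrow> r 0 \<in> initial A \<and> (\<forall>i. r (Suc i) \<in> delta A (r i) (w i))"

definition inf_states :: "(nat \<Rightarrow> 'q) \<Rightarrow> 'q set" where
  "inf_states r = {q. \<exists>\<^sub>\<infinity> i. r i = q}"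

definition lang :: "('q set \<Rightarrow> bool) \<Rightarrow> ('a, 'q, 'c) automaton \<Rightarrow> (nat \<Rightarrow> 'a) set" where
  "lang Acc A = {w. is_word A w \<and> (\<exists>r. is_run A w r \<and> Acc (inf_states r))}"

definition rabin_lang :: "('a, 'q) nrw \<Rightarrow> (nat \<Rightarrow> 'a) set" where
  "rabin_lang A = lang (rabin_accepting (acc A)) A"

definition buchi_lang :: "('a, 'q) nbw \<Rightarrow> (nat \<Rightarrow> 'a) set" where
  "buchi_lang A = lang (buchi_accepting (acc A)) A"

definition prefix :: "(nat \<Rightarrow> 'a) \<Rightarrow> nat \<Rightarrow> 'a list" where
  "prefix w i = map w [0..<i]"

definition is_gfg_strategy ::
  "('q set \<Rightarrow> bool) \<Rightarrow> ('a, 'q, 'c) automaton \<Rightarrow> ('a list \<Rightarrow> 'q) \<Rightarrow> bool" where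
  "is_gfg_strategy Acc A g \<longleftrightarrow>
     (\<forall>w. is_word A w \<longrightarrow>
        is_run A w (\<lambda>i. g (prefix w i)) \<and>
        (w \<in> lang Acc A \<longrightarrow> Acc (inf_states (\<lambda>i. g (prefix w i)))))"

definition GFG_NRW :: "('a, 'q) nrw \<Rightarrow> bool" where
  "GFG_NRW A \<longleftrightarrow> wf_aut A \<and> (\<exists>g. is_gfg_strategy (rabin_accepting (acc A)) A g)"

definition GFG_NBW :: "('a, 'q) nbw \<Rightarrow> bool" where
  "GFG_NBW B \<longleftrightarrow> wf_aut B \<and> (\<exists>g. is_gfg_strategy (buchi_accepting (acc B)) B g)"

record ('a, 'q, 'm) transducer =
  mems :: "'m set"
  mem0 :: 'm
  rho  :: "'m \<Rightarrow> 'a \<Rightarrow> 'm"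
  tau  :: "'m \<Rightarrow> 'q"

definition rho_star :: "('a, 'q, 'm) transducer \<Rightarrow> 'a list \<Rightarrow> 'm" where
  "rho_star T u = foldl (rho T) (mem0 T) u"

definition strat :: "('a, 'q, 'm) transducer \<Rightarrow> 'a list \<Rightarrow> 'q" where
  "strat T u = tau T (rho_star T u)"

definition wf_transducer :: "('a, 'q, 'c) automaton \<Rightarrow> ('a, 'q, 'm) transducer \<Rightarrow> bool" where
  "wf_transducer A T \<longleftrightarrow> finite (mems T) \<and> mem0 T \<in> mems T \<and>
     (\<forall>m\<in>mems T. \<forall>a\<in>alphabet A. rho T m a \<in> mems T)"

definition fs_witness :: "('a, 'q) nrw \<Rightarrow> ('a, 'q, 'm) transducer \<Rightarrow> bool" where
  "fs_witness A T \<longleftrightarrow> wf_transducer A T \<and>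
     is_gfg_strategy (rabin_accepting (acc A)) A (strat T)"

text \<open>The acceptance condition alpha_g of A_g (every set replaced by its tau-preimage).\<close>
definition acc_g :: "('a, 'q) nrw \<Rightarrow> ('a, 'q, 'm) transducer \<Rightarrow> ('m set \<times> 'm set) set" where
  "acc_g A T = (\<lambda>(E, F). ({m \<in> mems T. tau T m \<in> E}, {m \<in> mems T. tau T m \<in> F})) ` acc A"

definition used_by :: "('a, 'q, 'c) automaton \<Rightarrow> ('a, 'q, 'm) transducer \<Rightarrow> 'q \<Rightarrow> 'a \<Rightarrow> 'q \<Rightarrow> bool" where
  "used_by A T q a q' \<longleftrightarrow>
     (\<exists>u. set u \<subseteq> alphabet A \<and> q = strat T u \<and> q' = strat T (u @ [a]))"

text \<open>Finite paths of A_g, as nonempty lists of memories.\<close>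
definition mpath :: "('a, 'q, 'c) automaton \<Rightarrow> ('a, 'q, 'm) transducer \<Rightarrow> 'm list \<Rightarrow> bool" where
  "mpath A T ms \<longleftrightarrow> ms \<noteq> [] \<and> set ms \<subseteq> mems T \<and>
     (\<forall>i. Suc i < length ms \<longrightarrow> (\<exists>a\<in>alphabet A. ms ! Suc i = rho T (ms ! i) a))"

definition mpaths_from_to ::
  "('a, 'q, 'c) automaton \<Rightarrow> ('a, 'q, 'm) transducer \<Rightarrow> 'm \<Rightarrow> 'm \<Rightarrow> 'm list set" where
  "mpaths_from_to A T m1 m2 = {ms. mpath A T ms \<and> hd ms = m1 \<and> last ms = m2}"

definition replaceable :: "('a, 'q) nrw \<Rightarrow> ('a, 'q, 'm) transducer \<Rightarrow> 'm \<Rightarrow> 'm \<Rightarrow> bool" where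
  "replaceable A T m m' \<longleftrightarrow> m \<in> mems T \<and> m' \<in> mems T \<and> m \<noteq> m' \<and> tau T m = tau T m' \<and>
     (mpaths_from_to A T m' m = {} \<or>
      (\<forall>P. P \<subseteq> mpaths_from_to A T m' m \<and> P \<noteq> {} \<longrightarrow>
           rabin_accepting (acc_g A T) (\<Union>ms\<in>P. set ms)))"

definition tight_wrt :: "('a, 'q) nrw \<Rightarrow> ('a, 'q, 'm) transducer \<Rightarrow> bool" where
  "tight_wrt A T \<longleftrightarrow> fs_witness A T \<and>
     (\<forall>q\<in>states A. \<forall>a\<in>alphabet A. \<forall>q'\<in>delta A q a. used_by A T q a q') \<and>
     (\<forall>m m'. \<not> replaceable A T m m')"

text \<open>Cycles of A_g: paths of length at least one returning to the start.\<close>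
definition mcycle :: "('a, 'q, 'c) automaton \<Rightarrow> ('a, 'q, 'm) transducer \<Rightarrow> 'm list \<Rightarrow> bool" where
  "mcycle A T ms \<longleftrightarrow> mpath A T ms \<and> length ms \<ge> 2 \<and> hd ms = last ms"

definition excl_accepting_cycle :: "('a, 'q) nrw \<Rightarrow> ('a, 'q, 'm) transducer \<Rightarrow> 'q \<Rightarrow> bool" where
  "excl_accepting_cycle A T q \<longleftrightarrow>
     (\<exists>ms. mcycle A T ms \<and> rabin_accepting (acc_g A T) (set ms) \<and>
        \<not> rabin_accepting (acc_g A T) (set ms - {m. tau T m = q}))"

definition strongly_tight_wrt :: "('a, 'q) nrw \<Rightarrow> ('a, 'q, 'm) transducer \<Rightarrow> bool" where
  "strongly_tight_wrt A T \<longleftrightarrow> tight_wrt A T \<and>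
     (\<forall>q\<in>states A. (\<exists>(E, F)\<in>acc A. q \<in> F) \<longrightarrow> excl_accepting_cycle A T q)"

text \<open>Memories are encoded as natural numbers (any finite memory set can be renamed).\<close>
definition strongly_tight :: "('a, 'q) nrw \<Rightarrow> bool" where
  "strongly_tight A \<longleftrightarrow> (\<exists>T :: ('a, 'q, nat) transducer. strongly_tight_wrt A T)"

definition is_cycle :: "('a, 'q, 'c) automaton \<Rightarrow> 'q list \<Rightarrow> bool" where
  "is_cycle A qs \<longleftrightarrow> length qs \<ge> 2 \<and> set qs \<subseteq> states A \<and> hd qs = last qs \<and>
     (\<forall>i. Suc i < length qs \<longrightarrow> (\<exists>a\<in>alphabet A. qs ! Suc i \<in> delta A (qs ! i) a))"

definition rejecting_cycle :: "('a, 'q) nrw \<Rightarrow> 'q list \<Rightarrow> bool" where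
  "rejecting_cycle A qs \<longleftrightarrow> is_cycle A qs \<and> \<not> rabin_accepting (acc A) (set qs)"

end

theory Submission
  imports Defs "HOL-Library.Infinite_Set"
begin


definition mrun :: "('a, 'q, 'm) transducer \<Rightarrow> 'm \<Rightarrow> 'a list \<Rightarrow> 'm" where
  "mrun T \<mu> u = foldl (rho T) \<mu> u"

definition vis :: "('a, 'q, 'm) transducer \<Rightarrow> 'm \<Rightarrow> 'a list \<Rightarrow> 'm set" where
  "vis T \<mu> u = {mrun T \<mu> (take k u) | k. k \<le> length u}"

lemma mrun_append: "mrun T \<mu> (u @ v) = mrun T (mrun T \<mu> u) v"
  by (simp add: mrun_def)

lemma mrun_Nil[simp]: "mrun T \<mu> [] = \<mu>"
  by (simp add: mrun_def)

lemma mrun_snoc: "mrun T \<mu> (u @ [a]) = rho T (mrun T \<mu> u) a"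
  by (simp add: mrun_def)

lemma rho_star_mrun: "rho_star T u = mrun T (mem0 T) u"
  by (simp add: rho_star_def mrun_def)

lemma vis_start: "\<mu> \<in> vis T \<mu> u"
  unfolding vis_def by (rule CollectI, rule exI[of _ 0]) simp

lemma vis_end: "mrun T \<mu> u \<in> vis T \<mu> u"
  unfolding vis_def by (rule CollectI, rule exI[of _ "length u"]) simp

lemma vis_Nil[simp]: "vis T \<mu> [] = {\<mu>}"
  unfolding vis_def by auto

lemma vis_append: "vis T \<mu> (u @ v) = vis T \<mu> u \<union> vis T (mrun T \<mu> u) v"
proof
  show "vis T \<mu> (u @ v) \<subseteq> vis T \<mu> u \<union> vis T (mrun T \<mu> u) v"
  proof
    fix z assume "z \<in> vis T \<mu> (u @ v)"
    then obtain k where k: "k \<le> length (u @ v)" "z = mrun T \<mu> (take k (u @ v))"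
      unfolding vis_def by auto
    show "z \<in> vis T \<mu> u \<union> vis T (mrun T \<mu> u) v"
    proof (cases "k \<le> length u")
      case True
      then have "z = mrun T \<mu> (take k u)" using k by simp
      then show ?thesis using True unfolding vis_def by auto
    next
      case False
      then have "z = mrun T (mrun T \<mu> u) (take (k - length u) v)"
        using k by (simp add: mrun_append)
      moreover have "k - length u \<le> length v" using k by simp
      ultimately show ?thesis unfolding vis_def by auto
    qed
  qed
next
  show "vis T \<mu> u \<union> vis T (mrun T \<mu> u) v \<subseteq> vis T \<mu> (u @ v)"
  proof
    fix z assume "z \<in> vis T \<mu> u \<union> vis T (mrun T \<mu> u) v"
    then show "z \<in> vis T \<mu> (u @ v)"
    proof
      assume "z \<in> vis T \<mu> u"
      then obtain k where k: "k \<le> length u" "z = mrun T \<mu> (take k u)"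
        unfolding vis_def by auto
      then have "z = mrun T \<mu> (take k (u @ v))" by simp
      then show ?thesis using k unfolding vis_def by (intro CollectI exI[of _ k] conjI) auto
    next
      assume "z \<in> vis T (mrun T \<mu> u) v"
      then obtain k where k: "k \<le> length v" "z = mrun T (mrun T \<mu> u) (take k v)"
        unfolding vis_def by auto
      then have "z = mrun T \<mu> (take (length u + k) (u @ v))" by (simp add: mrun_append)
      then show ?thesis using k unfolding vis_def by (intro CollectI exI[of _ "length u + k"] conjI) auto
    qed
  qed
qed

lemma vis_single: "vis T \<mu> [a] = {\<mu>, rho T \<mu> a}"
proof -
  have "{k. k \<le> length [a]} = {0, 1}" by auto
  have "vis T \<mu> [a] = (\<lambda>k. mrun T \<mu> (take k [a])) ` {k. k \<le> length [a]}"
    unfolding vis_def by auto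
  also have "{k. k \<le> length [a]} = {0, 1}" by auto
  finally show ?thesis by (simp add: mrun_def)
qed

lemma vis_snoc: "vis T \<mu> (u @ [a]) = vis T \<mu> u \<union> {rho T (mrun T \<mu> u) a}"
  using vis_end[of T \<mu> u] by (auto simp: vis_append vis_single)

lemma mrun_mems:
  assumes "wf_transducer A T" "\<mu> \<in> mems T" "set u \<subseteq> alphabet A"
  shows "mrun T \<mu> u \<in> mems T"
  using assms(2,3)
proof (induction u arbitrary: \<mu>)
  case Nil then show ?case by simp
next
  case (Cons a u)
  have "rho T \<mu> a \<in> mems T" using assms(1) Cons.prems unfolding wf_transducer_def by auto
  then show ?case using Cons by (simp add: mrun_def)
qed

lemma vis_mems:
  assumes "wf_transducer A T" "\<mu> \<in> mems T" "set u \<subseteq> alphabet A"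
  shows "vis T \<mu> u \<subseteq> mems T"
proof
  fix z assume "z \<in> vis T \<mu> u"
  then obtain k where "z = mrun T \<mu> (take k u)" unfolding vis_def by auto
  moreover have "set (take k u) \<subseteq> alphabet A" by (rule subset_trans[OF set_take_subset assms(3)])
  ultimately show "z \<in> mems T" using mrun_mems[OF assms(1,2)] by simp
qed

lemma rho_star_mems:
  assumes "wf_transducer A T" "set u \<subseteq> alphabet A"
  shows "rho_star T u \<in> mems T"
  using mrun_mems[OF assms(1) _ assms(2)] assms(1) by (simp add: rho_star_mrun wf_transducer_def)

lemma path_word:
  assumes "\<forall>i<n. \<exists>a\<in>alphabet A. f (Suc i) = rho T (f i) a"
  shows "\<exists>u. set u \<subseteq> alphabet A \<and> length u = n \<and> mrun T (f 0) u = f n \<and> vis T (f 0) u = f ` {..n}"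
  using assms
proof (induction n)
  case 0 then show ?case by (intro exI[of _ "[]"]) auto
next
  case (Suc n)
  then obtain u where u: "set u \<subseteq> alphabet A" "length u = n" "mrun T (f 0) u = f n" "vis T (f 0) u = f ` {..n}"
    by auto
  obtain a where a: "a \<in> alphabet A" "f (Suc n) = rho T (f n) a" using Suc.prems by auto
  have "{..Suc n} = insert (Suc n) {..n}" by auto
  then show ?case using u a
    by (intro exI[of _ "u @ [a]"]) (auto simp: mrun_snoc vis_snoc)
qed

lemma mpath_word:
  assumes "mpath A T ms"
  shows "\<exists>u. set u \<subseteq> alphabet A \<and> mrun T (hd ms) u = last ms \<and> vis T (hd ms) u = set ms"
proof -
  let ?n = "length ms - 1"
  have ne: "ms \<noteq> []" using assms unfolding mpath_def by auto
  have "\<forall>i<?n. \<exists>a\<in>alphabet A. ms ! Suc i = rho T (ms ! i) a"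
    using assms unfolding mpath_def by auto
  from path_word[of ?n A "\<lambda>i. ms ! i" T, OF this] obtain u where
    u: "set u \<subseteq> alphabet A" "mrun T (ms ! 0) u = ms ! ?n" "vis T (ms ! 0) u = (\<lambda>i. ms ! i) ` {..?n}"
    by auto
  have "(\<lambda>i. ms ! i) ` {..?n} = set ms"
    using ne by (auto simp: set_conv_nth image_def) (metis Suc_pred length_greater_0_conv less_Suc_eq_le)+
  then show ?thesis using u ne by (auto simp: hd_conv_nth last_conv_nth)
qed


lemma cyc_rot:
  assumes len: "length xs \<ge> 2" and hl: "hd xs = last xs"
    and st: "\<forall>i. Suc i < length xs \<longrightarrow> R (xs ! i) (xs ! Suc i)"
    and z: "z \<in> set xs"
  shows "\<exists>f n. n \<ge> 1 \<and> f 0 = z \<and> f n = z \<and> (\<forall>i<n. R (f i) (f (Suc i))) \<and> f ` {..n} = set xs"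
proof -
  define n where "n = length xs - 1"
  have n1: "n \<ge> 1" using len by (simp add: n_def)
  have ne: "xs \<noteq> []" using len by auto
  have x0n: "xs ! 0 = xs ! n" using hl ne by (simp add: hd_conv_nth last_conv_nth n_def)
  obtain j where j: "j < n" "xs ! j = z"
  proof -
    obtain t where t: "t < length xs" "xs ! t = z" using z by (auto simp: in_set_conv_nth)
    show ?thesis
    proof (cases "t < n")
      case True then show ?thesis using that t by blast
    next
      case False
      then have "t = n" using t by (simp add: n_def)
      then show ?thesis using that[of 0] t x0n n1 by auto
    qed
  qed
  define f where "f i = xs ! ((i + j) mod n)" for i
  have f0: "f 0 = z" using j by (simp add: f_def)
  have fn: "f n = z" using j by (simp add: f_def)
  have step: "R (f i) (f (Suc i))" for i
  proof -
    let ?t = "(i + j) mod n"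
    have tn: "?t < n" using n1 by simp
    show ?thesis
    proof (cases "Suc ?t < n")
      case True
      then have "(Suc i + j) mod n = Suc ?t"
        by (metis add_Suc mod_Suc not_less_iff_gr_or_eq)
      then show ?thesis using st True by (simp add: f_def n_def)
    next
      case False
      then have t: "Suc ?t = n" using tn by simp
      then have "(Suc i + j) mod n = 0"
        by (metis add_Suc mod_Suc n1 not_one_le_zero)
      then have "f (Suc i) = xs ! n" using x0n by (simp add: f_def)
      moreover have "Suc ?t < length xs" using t len by (simp add: n_def)
      moreover have "R (xs ! ?t) (xs ! n)" using st[rule_format, OF \<open>Suc ?t < length xs\<close>] t by simp
      ultimately show ?thesis by (simp add: f_def)
    qed
  qed
  have img: "f ` {..n} = set xs"
  proof
    show "f ` {..n} \<subseteq> set xs"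
    proof
      fix y assume "y \<in> f ` {..n}"
      then obtain i where "y = f i" by auto
      moreover have "(i + j) mod n < n" using n1 by simp
      moreover have "n < length xs" using len by (simp add: n_def)
      ultimately show "y \<in> set xs" by (simp add: f_def)
    qed
  next
    show "set xs \<subseteq> f ` {..n}"
    proof
      fix y assume "y \<in> set xs"
      then obtain t where t: "t < length xs" "xs ! t = y" by (auto simp: in_set_conv_nth)
      obtain t' where t': "t' < n" "xs ! t' = y"
      proof (cases "t < n")
        case True then show ?thesis using that t by blast
      next
        case False
        then have "t = n" using t by (simp add: n_def)
        then show ?thesis using that[of 0] t x0n n1 by auto
      qed
      define i where "i = (t' + n - j) mod n"
      have "(i + j) mod n = t'"
      proof -
        have "(i + j) mod n = ((t' + n - j) + j) mod n" by (simp add: i_def mod_add_left_eq)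
        also have "(t' + n - j) + j = t' + n" using j by simp
        finally show ?thesis using t' by simp
      qed
      moreover have "i \<le> n" using n1 by (simp add: i_def less_imp_le)
      ultimately show "y \<in> f ` {..n}" using t' by (auto simp: f_def)
    qed
  qed
  show ?thesis using n1 f0 fn step img by blast
qed

lemma acc_conv:
  assumes "M \<subseteq> mems T"
  shows "rabin_accepting (acc_g A T) M \<longleftrightarrow> rabin_accepting (acc A) (tau T ` M)"
proof
  assume "rabin_accepting (acc_g A T) M"
  then obtain E F where EF: "(E, F) \<in> acc A"
    "M \<inter> {m \<in> mems T. tau T m \<in> E} = {}" "M \<inter> {m \<in> mems T. tau T m \<in> F} \<noteq> {}"
    unfolding rabin_accepting_def acc_g_def by auto
  then have "tau T ` M \<inter> E = {}" "tau T ` M \<inter> F \<noteq> {}" using assms by auto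
  then show "rabin_accepting (acc A) (tau T ` M)" using EF(1) unfolding rabin_accepting_def
    by (intro bexI[of _ "(E, F)"]) auto
next
  assume "rabin_accepting (acc A) (tau T ` M)"
  then obtain E F where EF: "(E, F) \<in> acc A" "tau T ` M \<inter> E = {}" "tau T ` M \<inter> F \<noteq> {}"
    unfolding rabin_accepting_def by auto
  then have "M \<inter> {m \<in> mems T. tau T m \<in> E} = {}" "M \<inter> {m \<in> mems T. tau T m \<in> F} \<noteq> {}"
    using assms by auto
  moreover have "({m \<in> mems T. tau T m \<in> E}, {m \<in> mems T. tau T m \<in> F}) \<in> acc_g A T"
    using EF(1) unfolding acc_g_def by (rule rev_image_eqI) simp
  ultimately show "rabin_accepting (acc_g A T) M" unfolding rabin_accepting_def
    by (intro bexI[of _ "({m \<in> mems T. tau T m \<in> E}, {m \<in> mems T. tau T m \<in> F})"]) auto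
qed

lemma rej_union:
  assumes "\<not> rabin_accepting \<alpha> (X - {q})" "q \<in> S"
    and "\<forall>s\<in>S. \<exists>R\<subseteq>S. s \<in> R \<and> \<not> rabin_accepting \<alpha> R"
  shows "\<not> rabin_accepting \<alpha> (X \<union> S)"
proof
  assume "rabin_accepting \<alpha> (X \<union> S)"
  then obtain E F where EF: "(E, F) \<in> \<alpha>" "(X \<union> S) \<inter> E = {}" "(X \<union> S) \<inter> F \<noteq> {}"
    unfolding rabin_accepting_def by auto
  show False
  proof (cases "(X - {q}) \<inter> F = {}")
    case False
    then have "rabin_accepting \<alpha> (X - {q})" using EF unfolding rabin_accepting_def by blast
    then show False using assms(1) by simp
  next
    case True
    then obtain s where s: "s \<in> S" "s \<in> F" using EF(3) assms(2) by blast
    then obtain R where R: "R \<subseteq> S" "s \<in> R" "\<not> rabin_accepting \<alpha> R" using assms(3) by blast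
    have "R \<inter> E = {}" "R \<inter> F \<noteq> {}" using R s EF(2) by auto
    then have "rabin_accepting \<alpha> R" using EF(1) unfolding rabin_accepting_def by blast
    then show False using R by simp
  qed
qed

definition loopset :: "('a, 'q, 'c) automaton \<Rightarrow> ('a, 'q, 'm) transducer \<Rightarrow> 'm \<Rightarrow> 'm set \<Rightarrow> bool" where
  "loopset A T m S \<longleftrightarrow> (\<exists>y. set y \<subseteq> alphabet A \<and> mrun T m y = m \<and> vis T m y = S)"

lemma loopset_UN:
  assumes "finite I" "I \<noteq> {}" "\<forall>i\<in>I. loopset A T m (S i)"
  shows "loopset A T m (\<Union>i\<in>I. S i)"
  using assms
proof (induction I rule: finite_ne_induct)
  case (singleton x) then show ?case by simp
next
  case (insert x F)
  then obtain y1 where y1: "set y1 \<subseteq> alphabet A" "mrun T m y1 = m" "vis T m y1 = S x"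
    unfolding loopset_def by auto
  from insert obtain y2 where y2: "set y2 \<subseteq> alphabet A" "mrun T m y2 = m" "vis T m y2 = (\<Union>i\<in>F. S i)"
    unfolding loopset_def by auto
  show ?case unfolding loopset_def using y1 y2
    by (intro exI[of _ "y1 @ y2"]) (auto simp: mrun_append vis_append)
qed

lemma connect:
  assumes tight: "tight_wrt A T" and \<alpha>: "\<alpha> \<in> mems T" and \<beta>: "\<beta> \<in> mems T" and tq: "tau T \<alpha> = tau T \<beta>"
  shows "\<exists>W. finite W \<and> W \<noteq> {} \<and> (\<forall>w\<in>W. set w \<subseteq> alphabet A \<and> mrun T \<alpha> w = \<beta>) \<and>
     (tau T ` (\<Union>w\<in>W. vis T \<alpha> w) = {tau T \<alpha>} \<or>
      \<not> rabin_accepting (acc A) (tau T ` (\<Union>w\<in>W. vis T \<alpha> w)))"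
proof (cases "\<alpha> = \<beta>")
  case True
  then show ?thesis by (intro exI[of _ "{[]}"]) auto
next
  case False
  have wf: "wf_transducer A T" using tight unfolding tight_wrt_def fs_witness_def by auto
  have "\<not> replaceable A T \<beta> \<alpha>" using tight unfolding tight_wrt_def by auto
  then obtain P where P: "P \<subseteq> mpaths_from_to A T \<alpha> \<beta>" "P \<noteq> {}"
    "\<not> rabin_accepting (acc_g A T) (\<Union>ms\<in>P. set ms)"
    using \<alpha> \<beta> False tq unfolding replaceable_def by auto
  let ?U = "\<Union>ms\<in>P. set ms"
  have Umems: "?U \<subseteq> mems T" using P(1) unfolding mpaths_from_to_def mpath_def by auto
  then have finU: "finite ?U" using wf unfolding wf_transducer_def by (meson finite_subset)
  define pick where "pick x = (SOME ms. ms \<in> P \<and> x \<in> set ms)" for x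
  have pick: "pick x \<in> P \<and> x \<in> set (pick x)" if "x \<in> ?U" for x
    unfolding pick_def by (rule someI_ex) (use that in blast)
  define P' where "P' = pick ` ?U"
  have P'P: "P' \<subseteq> P" using pick unfolding P'_def by auto
  have UP': "(\<Union>ms\<in>P'. set ms) = ?U" using pick P'P by (auto simp: P'_def)
  have finP': "finite P'" using finU by (simp add: P'_def)
  have "?U \<noteq> {}"
  proof -
    obtain ms where "ms \<in> P" using P(2) by auto
    then have "ms \<noteq> []" using P(1) unfolding mpaths_from_to_def mpath_def by auto
    then show ?thesis using \<open>ms \<in> P\<close> by auto
  qed
  then have neP': "P' \<noteq> {}" by (simp add: P'_def)
  define wd where "wd ms = (SOME u. set u \<subseteq> alphabet A \<and> mrun T (hd ms) u = last ms \<and> vis T (hd ms) u = set ms)" for ms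
  have wd: "set (wd ms) \<subseteq> alphabet A \<and> mrun T \<alpha> (wd ms) = \<beta> \<and> vis T \<alpha> (wd ms) = set ms" if "ms \<in> P'" for ms
  proof -
    have mp: "mpath A T ms" "hd ms = \<alpha>" "last ms = \<beta>" using that P'P P(1) unfolding mpaths_from_to_def by auto
    have "set (wd ms) \<subseteq> alphabet A \<and> mrun T (hd ms) (wd ms) = last ms \<and> vis T (hd ms) (wd ms) = set ms"
      unfolding wd_def by (rule someI_ex) (rule mpath_word[OF mp(1)])
    then show ?thesis using mp by simp
  qed
  define W where "W = wd ` P'"
  have "(\<Union>w\<in>W. vis T \<alpha> w) = ?U" using wd UP' by (auto simp: W_def)
  moreover have "\<not> rabin_accepting (acc A) (tau T ` ?U)" using P(3) acc_conv[OF Umems] by blast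
  ultimately show ?thesis using finP' neP' wd
    by (intro exI[of _ W]) (auto simp: W_def)
qed


definition limw :: "(nat \<Rightarrow> 'a list) \<Rightarrow> nat \<Rightarrow> 'a" where
  "limw pre j = pre (Suc j) ! j"

lemma pre_len:
  assumes "\<forall>i. length (pre i) < length (pre (Suc i))"
  shows "length (pre 0) + i \<le> length (pre i)"
proof (induction i)
  case 0 then show ?case by simp
next
  case (Suc i)
  have "length (pre i) < length (pre (Suc i))" using assms by blast
  then show ?case using Suc by simp
qed

lemma pre_mono:
  assumes "\<forall>i. \<exists>b. pre (Suc i) = pre i @ b" "i \<le> j"
  shows "\<exists>z. pre j = pre i @ z"
  using assms(2)
proof (induction j rule: dec_induct)
  case base then show ?case by simp
next
  case (step j)
  then obtain z where "pre j = pre i @ z" by auto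
  moreover obtain b where "pre (Suc j) = pre j @ b" using assms(1) by auto
  ultimately show ?case by auto
qed

lemma prefix_limw:
  assumes ext: "\<forall>i. \<exists>b. pre (Suc i) = pre i @ b" and inc: "\<forall>i. length (pre i) < length (pre (Suc i))"
    and l: "l \<le> length (pre i)"
  shows "prefix (limw pre) l = take l (pre i)"
proof (rule nth_equalityI)
  show "length (prefix (limw pre) l) = length (take l (pre i))" using l by (simp add: prefix_def)
next
  fix t assume "t < length (prefix (limw pre) l)"
  then have t: "t < l" by (simp add: prefix_def)
  define k where "k = max i (Suc t)"
  obtain z1 where z1: "pre k = pre i @ z1" using pre_mono[OF ext, of i k] by (auto simp: k_def)
  obtain z2 where z2: "pre k = pre (Suc t) @ z2" using pre_mono[OF ext, of "Suc t" k] by (auto simp: k_def)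
  have "Suc t \<le> length (pre (Suc t))" using pre_len[OF inc, of "Suc t"] by simp
  then have "pre (Suc t) ! t = pre k ! t" using z2 by (simp add: nth_append)
  also have "\<dots> = pre i ! t" using z1 t l by (simp add: nth_append)
  finally show "prefix (limw pre) l ! t = take l (pre i) ! t" using t by (simp add: prefix_def limw_def)
qed

lemma limw_letter:
  assumes inc: "\<forall>i. length (pre i) < length (pre (Suc i))" and "\<forall>i. set (pre i) \<subseteq> S"
  shows "limw pre t \<in> S"
proof -
  have "t < length (pre (Suc t))" using pre_len[OF inc, of "Suc t"] by simp
  then show ?thesis using assms(2) unfolding limw_def by (meson nth_mem subsetD)
qed

lemma interval:
  assumes inc: "\<forall>i. length (pre i) < length (pre (Suc i))"
  shows "length (pre 0) \<le> l \<Longrightarrow> \<exists>i. length (pre i) \<le> l \<and> l < length (pre (Suc i))"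
proof (induction l)
  case 0 then show ?case using inc[rule_format, of 0] by (intro exI[of _ 0]) simp
next
  case (Suc l)
  show ?case
  proof (cases "length (pre 0) \<le> l")
    case True
    then obtain i where i: "length (pre i) \<le> l" "l < length (pre (Suc i))" using Suc by auto
    show ?thesis
    proof (cases "Suc l < length (pre (Suc i))")
      case True then show ?thesis using i by (intro exI[of _ i]) auto
    next
      case False
      then have "Suc l = length (pre (Suc i))" using i by simp
      then show ?thesis using inc by (intro exI[of _ "Suc i"]) auto
    qed
  next
    case False
    then have "length (pre 0) = Suc l" using Suc.prems by simp
    then show ?thesis using inc[rule_format, of 0] by (intro exI[of _ 0]) simp
  qed
qed

lemma block_inf:
  assumes ext: "\<forall>i. pre (Suc i) = pre i @ blk i" and ne: "\<forall>i. blk i \<noteq> []"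
    and run: "\<forall>i. rho_star T (pre i) = m"
    and vz: "\<forall>i. vis T m (blk i) = Z"
  shows "inf_states (\<lambda>l. strat T (prefix (limw pre) l)) = tau T ` Z"
proof -
  have ext': "\<forall>i. \<exists>b. pre (Suc i) = pre i @ b" using ext by auto
  have inc: "\<forall>i. length (pre i) < length (pre (Suc i))" using ext ne by simp
  have key: "rho_star T (prefix (limw pre) (length (pre i) + k)) = mrun T m (take k (blk i))"
    if "k \<le> length (blk i)" for i k
  proof -
    have "prefix (limw pre) (length (pre i) + k) = take (length (pre i) + k) (pre (Suc i))"
      using that ext by (intro prefix_limw[OF ext' inc]) simp
    also have "\<dots> = pre i @ take k (blk i)" using ext by simp
    finally show ?thesis using run by (simp add: rho_star_mrun mrun_append)
  qed
  show ?thesis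
  proof
    show "inf_states (\<lambda>l. strat T (prefix (limw pre) l)) \<subseteq> tau T ` Z"
    proof
      fix s assume "s \<in> inf_states (\<lambda>l. strat T (prefix (limw pre) l))"
      then have "\<exists>\<^sub>\<infinity>l. strat T (prefix (limw pre) l) = s" unfolding inf_states_def by simp
      then obtain l where l: "l > length (pre 0)" "strat T (prefix (limw pre) l) = s"
        unfolding INFM_nat by blast
      have "\<exists>i. length (pre i) \<le> l \<and> l < length (pre (Suc i))" using interval[OF inc, of l] l(1) by simp
      then obtain i where i: "length (pre i) \<le> l" "l < length (pre (Suc i))" by blast
      define k where "k = l - length (pre i)"
      have k: "k \<le> length (blk i)" "l = length (pre i) + k" using i ext by (auto simp: k_def)
      have "mrun T m (take k (blk i)) \<in> Z" using vz k(1) unfolding vis_def by blast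
      then show "s \<in> tau T ` Z" using l(2) key[OF k(1)] k(2) by (auto simp: strat_def)
    qed
  next
    show "tau T ` Z \<subseteq> inf_states (\<lambda>l. strat T (prefix (limw pre) l))"
    proof
      fix s assume "s \<in> tau T ` Z"
      then obtain z where z: "z \<in> Z" "s = tau T z" by auto
      have "\<forall>N. \<exists>l\<ge>N. strat T (prefix (limw pre) l) = s"
      proof
        fix N
        have "z \<in> vis T m (blk N)" using vz z by simp
        then obtain k where k: "k \<le> length (blk N)" "z = mrun T m (take k (blk N))"
          unfolding vis_def by auto
        have "N \<le> length (pre N)" using pre_len[OF inc, of N] by simp
        then show "\<exists>l\<ge>N. strat T (prefix (limw pre) l) = s"
          using key[OF k(1)] k z by (intro exI[of _ "length (pre N) + k"]) (auto simp: strat_def)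
      qed
      then show "s \<in> inf_states (\<lambda>l. strat T (prefix (limw pre) l))"
        unfolding inf_states_def INFM_nat_le by simp
    qed
  qed
qed

lemma concat_rep_Suc: "concat (replicate (Suc i) x) = concat (replicate i x) @ x"
  by (induction i) auto

lemma mrun_rep:
  assumes "mrun T m x = m" shows "mrun T m (concat (replicate i x)) = m"
  using assms by (induction i) (auto simp: mrun_append)

lemma vis_rep:
  assumes "mrun T m x = m" "i \<ge> 1" shows "vis T m (concat (replicate i x)) = vis T m x"
  using assms(2)
proof (induction i rule: dec_induct)
  case base then show ?case by simp
next
  case (step i)
  then show ?case using assms(1) mrun_rep[OF assms(1), of i]
    by (simp only: concat_rep_Suc vis_append) simp
qed

lemma set_rep: "set x \<subseteq> S \<Longrightarrow> set (concat (replicate i x)) \<subseteq> S"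
  by (induction i) auto


primrec adapt :: "('a list \<Rightarrow> nat) \<Rightarrow> 'a list \<Rightarrow> 'a list \<Rightarrow> 'a list \<Rightarrow> nat \<Rightarrow> 'a list" where
  "adapt K p x y 0 = p"
| "adapt K p x y (Suc i) = adapt K p x y i @ concat (replicate (K (adapt K p x y i)) x) @ y"

lemma len_rep: "length (concat (replicate k x)) = k * length x"
  by (induction k) auto

lemma run_states:
  assumes "wf_aut B" "is_word B w" "is_run B w r"
  shows "r i \<in> states B"
proof (induction i)
  case 0 then show ?case using assms unfolding wf_aut_def is_run_def by auto
next
  case (Suc i)
  have "r (Suc i) \<in> delta B (r i) (w i)" using assms(3) unfolding is_run_def by auto
  moreover have "w i \<in> alphabet B" using assms(2) unfolding is_word_def by auto
  ultimately show ?case using Suc assms(1) unfolding wf_aut_def by blast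
qed

lemma landweber:
  assumes fsw: "fs_witness A T" and gB: "GFG_NBW B" and alph: "alphabet B = alphabet A"
    and lan: "buchi_lang B = rabin_lang A"
    and p: "set p \<subseteq> alphabet A" "rho_star T p = m"
    and x: "set x \<subseteq> alphabet A" "x \<noteq> []" "mrun T m x = m"
    and y: "set y \<subseteq> alphabet A" "mrun T m y = m"
    and accx: "rabin_accepting (acc A) (tau T ` vis T m x)"
    and rej: "\<not> rabin_accepting (acc A) (tau T ` (vis T m x \<union> vis T m y))"
  shows False
proof -
  have gT: "is_gfg_strategy (rabin_accepting (acc A)) A (strat T)"
    using fsw unfolding fs_witness_def by auto
  obtain h where h: "is_gfg_strategy (buchi_accepting (acc B)) B h" and wfB: "wf_aut B"
    using gB unfolding GFG_NBW_def by auto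
  have wordAB: "is_word B w \<longleftrightarrow> is_word A w" for w using alph by (simp add: is_word_def)
  define Kp where "Kp v k \<longleftrightarrow> (\<exists>l. length v < l \<and> l \<le> length v + k * length x \<and>
      h (take l (v @ concat (replicate k x))) \<in> acc B)" for v k
  have Kex: "\<exists>k. Kp v k" if v: "set v \<subseteq> alphabet A" "rho_star T v = m" for v
  proof -
    define pre where "pre i = v @ concat (replicate i x)" for i
    have ext: "\<forall>i. pre (Suc i) = pre i @ x" by (simp only: pre_def concat_rep_Suc append_assoc) simp
    have inc: "\<forall>i. length (pre i) < length (pre (Suc i))" using ext x(2) by simp
    have ext': "\<forall>i. \<exists>b. pre (Suc i) = pre i @ b" using ext by blast
    have run: "\<forall>i. rho_star T (pre i) = m"
      using v mrun_rep[OF x(3)] by (simp add: pre_def rho_star_mrun mrun_append)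
    have setpre: "\<forall>i. set (pre i) \<subseteq> alphabet A" using v set_rep[OF x(1)] by (simp add: pre_def)
    define w where "w = limw pre"
    have word: "is_word A w" unfolding is_word_def w_def using limw_letter[OF inc setpre] by blast
    have infT: "inf_states (\<lambda>l. strat T (prefix w l)) = tau T ` vis T m x"
      unfolding w_def by (rule block_inf[of pre "\<lambda>i. x"]) (use ext x(2) run in auto)
    have "w \<in> rabin_lang A"
      unfolding rabin_lang_def lang_def using word gT infT accx unfolding is_gfg_strategy_def by auto
    then have wB: "w \<in> lang (buchi_accepting (acc B)) B" using lan by (simp add: buchi_lang_def)
    have "is_word B w" using word wordAB by simp
    then have "buchi_accepting (acc B) (inf_states (\<lambda>l. h (prefix w l)))"
      using h wB unfolding is_gfg_strategy_def by auto
    then obtain f where f: "f \<in> acc B" "\<exists>\<^sub>\<infinity>l. h (prefix w l) = f"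
      unfolding buchi_accepting_def inf_states_def by auto
    then obtain l where l: "l > length v" "h (prefix w l) = f" unfolding INFM_nat by blast
    have lx: "length x \<ge> 1" using x(2) by (simp add: Suc_le_eq)
    then have "l * 1 \<le> l * length x" by (rule mult_le_mono2)
    then have ll: "l \<le> length v + l * length x" by linarith
    have "l \<le> length (pre l)" using ll by (simp add: pre_def len_rep)
    then have "prefix w l = take l (pre l)" unfolding w_def by (rule prefix_limw[OF ext' inc])
    then have "Kp v l" unfolding Kp_def using l ll f(1) by (intro exI[of _ l]) (simp add: pre_def)
    then show ?thesis by blast
  qed
  define K where "K v = (SOME k. Kp v k)" for v
  define pre where "pre = adapt K p x y"
  have basic: "set (pre i) \<subseteq> alphabet A \<and> rho_star T (pre i) = m" for i
  proof (induction i)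
    case 0 then show ?case using p by (simp add: pre_def)
  next
    case (Suc i)
    then show ?case using set_rep[OF x(1)] y mrun_rep[OF x(3)]
      by (simp add: pre_def rho_star_mrun mrun_append)
  qed
  have Kpi: "Kp (pre i) (K (pre i))" for i
    unfolding K_def by (rule someI_ex) (rule Kex, use basic in auto)
  have K1: "K (pre i) \<ge> 1" for i
  proof (rule ccontr)
    assume "\<not> 1 \<le> K (pre i)"
    then have "K (pre i) = 0" by simp
    then show False using Kpi[of i] unfolding Kp_def by auto
  qed
  define blk where "blk i = concat (replicate (K (pre i)) x) @ y" for i
  have ext: "\<forall>i. pre (Suc i) = pre i @ blk i" by (simp add: pre_def blk_def)
  have ne: "\<forall>i. blk i \<noteq> []"
  proof
    fix i
    have "length (concat (replicate (K (pre i)) x)) \<ge> 1"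
      using K1[of i] x(2) by (simp add: len_rep Suc_le_eq)
    then show "blk i \<noteq> []" unfolding blk_def by (metis Nil_is_append_conv list.size(3) not_one_le_zero)
  qed
  have vz: "\<forall>i. vis T m (blk i) = vis T m x \<union> vis T m y"
    using vis_rep[OF x(3) K1] mrun_rep[OF x(3)] by (simp add: blk_def vis_append)
  have run: "\<forall>i. rho_star T (pre i) = m" using basic by simp
  have inc: "\<forall>i. length (pre i) < length (pre (Suc i))" using ext ne by simp
  have ext': "\<forall>i. \<exists>b. pre (Suc i) = pre i @ b" using ext by blast
  define W where "W = limw pre"
  have infT: "inf_states (\<lambda>l. strat T (prefix W l)) = tau T ` (vis T m x \<union> vis T m y)"
    unfolding W_def by (rule block_inf[OF ext ne run vz])
  have wordA: "is_word A W" unfolding is_word_def W_def using limw_letter[OF inc] basic by blast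
  then have wordB: "is_word B W" using wordAB by simp
  have hit: "\<exists>l>length (pre i). h (prefix W l) \<in> acc B" for i
  proof -
    obtain l where l: "length (pre i) < l" "l \<le> length (pre i) + K (pre i) * length x"
      "h (take l (pre i @ concat (replicate (K (pre i)) x))) \<in> acc B"
      using Kpi[of i] unfolding Kp_def by blast
    have "take l (pre i @ concat (replicate (K (pre i)) x)) = take l (pre (Suc i))"
      using l(2) by (simp add: pre_def len_rep)
    also have "\<dots> = prefix W l" unfolding W_def
      using l(2) by (intro prefix_limw[OF ext' inc, symmetric]) (simp add: pre_def len_rep)
    finally show ?thesis using l by auto
  qed
  have hrun: "is_run B W (\<lambda>l. h (prefix W l))" using h wordB unfolding is_gfg_strategy_def by auto
  have "\<exists>\<^sub>\<infinity>l. h (prefix W l) \<in> acc B"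
    unfolding INFM_nat
  proof
    fix N
    obtain l where "l > length (pre N)" "h (prefix W l) \<in> acc B" using hit by blast
    moreover have "N \<le> length (pre N)" using pre_len[OF inc, of N] by simp
    ultimately show "\<exists>l>N. h (prefix W l) \<in> acc B" by (intro exI[of _ l]) auto
  qed
  then have inf1: "\<exists>\<^sub>\<infinity>l. \<exists>f\<in>acc B \<inter> states B. h (prefix W l) = f"
    using run_states[OF wfB wordB hrun] by (auto elim!: INFM_mono)
  have fin: "finite (acc B \<inter> states B)" using wfB unfolding wf_aut_def by auto
  have "\<exists>f\<in>acc B \<inter> states B. \<exists>\<^sub>\<infinity>l. h (prefix W l) = f"
    using INFM_finite_Bex_distrib[OF fin, of "\<lambda>f l. h (prefix W l) = f"] inf1 by simp
  then obtain f where f: "f \<in> acc B \<inter> states B" "\<exists>\<^sub>\<infinity>l. h (prefix W l) = f"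
    by blast
  then have "buchi_accepting (acc B) (inf_states (\<lambda>l. h (prefix W l)))"
    unfolding buchi_accepting_def inf_states_def by auto
  then have "W \<in> buchi_lang B" unfolding buchi_lang_def lang_def using wordB hrun by auto
  then have "W \<in> rabin_lang A" using lan by simp
  then have "rabin_accepting (acc A) (inf_states (\<lambda>l. strat T (prefix W l)))"
    using gT wordA unfolding is_gfg_strategy_def rabin_lang_def by auto
  then show False using infT rej by simp
qed


primrec segw :: "(nat \<Rightarrow> 'a list) \<Rightarrow> (nat \<Rightarrow> 'a) \<Rightarrow> nat \<Rightarrow> 'a list" where
  "segw \<sigma> a 0 = []"
| "segw \<sigma> a (Suc k) = segw \<sigma> a k @ \<sigma> k @ [a k]"

lemma rej_loop:
  assumes tight: "tight_wrt A T"
    and n1: "n \<ge> 1" and c0: "c 0 = q" and cn: "c n = q"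
    and cst: "\<forall>i<n. \<exists>a\<in>alphabet A. c (Suc i) \<in> delta A (c i) a"
    and cstates: "\<forall>i\<le>n. c i \<in> states A"
    and crej: "\<not> rabin_accepting (acc A) (c ` {..n})"
    and m: "m \<in> mems T" "tau T m = q"
  shows "\<exists>V. loopset A T m V \<and> q \<in> tau T ` V \<and>
           (\<forall>s\<in>tau T ` V. \<exists>R\<subseteq>tau T ` V. s \<in> R \<and> \<not> rabin_accepting (acc A) R)"
proof -
  have wf: "wf_transducer A T" using tight unfolding tight_wrt_def fs_witness_def by auto
  have usedall: "\<forall>q\<in>states A. \<forall>a\<in>alphabet A. \<forall>q'\<in>delta A q a. used_by A T q a q'"
    using tight unfolding tight_wrt_def by auto
  have "\<forall>i. \<exists>b. i < n \<longrightarrow> b \<in> alphabet A \<and> c (Suc i) \<in> delta A (c i) b" using cst by blast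
  then obtain a where a: "\<forall>i. i < n \<longrightarrow> a i \<in> alphabet A \<and> c (Suc i) \<in> delta A (c i) (a i)"
    by (metis choice)
  have "\<forall>i. \<exists>u. i < n \<longrightarrow> set u \<subseteq> alphabet A \<and> c i = strat T u \<and> c (Suc i) = strat T (u @ [a i])"
  proof
    fix i
    show "\<exists>u. i < n \<longrightarrow> set u \<subseteq> alphabet A \<and> c i = strat T u \<and> c (Suc i) = strat T (u @ [a i])"
    proof (cases "i < n")
      case True
      then have "used_by A T (c i) (a i) (c (Suc i))" using usedall a cstates by auto
      then show ?thesis unfolding used_by_def by blast
    qed simp
  qed
  then obtain U where U: "\<forall>i. i < n \<longrightarrow> set (U i) \<subseteq> alphabet A \<and> c i = strat T (U i) \<and> c (Suc i) = strat T (U i @ [a i])"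
    by (metis choice)
  define \<mu> where "\<mu> i = rho_star T (U i)" for i
  have mu: "\<mu> i \<in> mems T \<and> tau T (\<mu> i) = c i \<and> rho T (\<mu> i) (a i) \<in> mems T \<and> tau T (rho T (\<mu> i) (a i)) = c (Suc i)"
    if "i < n" for i
  proof -
    have u: "set (U i) \<subseteq> alphabet A" "c i = strat T (U i)" "c (Suc i) = strat T (U i @ [a i])" using U that by auto
    have "set (U i @ [a i]) \<subseteq> alphabet A" using u(1) a that by auto
    then have "rho_star T (U i @ [a i]) \<in> mems T" by (rule rho_star_mems[OF wf])
    moreover have "rho_star T (U i @ [a i]) = rho T (\<mu> i) (a i)" by (simp add: \<mu>_def rho_star_mrun mrun_snoc)
    ultimately show ?thesis using rho_star_mems[OF wf u(1)] u by (simp add: \<mu>_def strat_def rho_star_mrun mrun_snoc)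
  qed
  define \<nu> where "\<nu> i = (if i = 0 then m else rho T (\<mu> (i - 1)) (a (i - 1)))" for i
  define tg where "tg i = (if i < n then \<mu> i else m)" for i
  have nu: "\<nu> i \<in> mems T \<and> tau T (\<nu> i) = c i" if "i \<le> n" for i
  proof (cases i)
    case 0 then show ?thesis using m c0 by (simp add: \<nu>_def)
  next
    case (Suc j) then show ?thesis using mu[of j] that by (simp add: \<nu>_def)
  qed
  have tgf: "tg i \<in> mems T \<and> tau T (tg i) = c i" if "i \<le> n" for i
    using mu[of i] m cn that by (auto simp: tg_def)
  have "\<forall>i. \<exists>W. i \<le> n \<longrightarrow> finite W \<and> W \<noteq> {} \<and> (\<forall>w\<in>W. set w \<subseteq> alphabet A \<and> mrun T (\<nu> i) w = tg i) \<and>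
     (tau T ` (\<Union>w\<in>W. vis T (\<nu> i) w) = {tau T (\<nu> i)} \<or>
      \<not> rabin_accepting (acc A) (tau T ` (\<Union>w\<in>W. vis T (\<nu> i) w)))"
  proof
    fix i
    show "\<exists>W. i \<le> n \<longrightarrow> finite W \<and> W \<noteq> {} \<and> (\<forall>w\<in>W. set w \<subseteq> alphabet A \<and> mrun T (\<nu> i) w = tg i) \<and>
     (tau T ` (\<Union>w\<in>W. vis T (\<nu> i) w) = {tau T (\<nu> i)} \<or>
      \<not> rabin_accepting (acc A) (tau T ` (\<Union>w\<in>W. vis T (\<nu> i) w)))"
    proof (cases "i \<le> n")
      case True
      then show ?thesis using connect[OF tight, of "\<nu> i" "tg i"] nu[OF True] tgf[OF True] by auto
    qed simp
  qed
  then obtain W where W: "\<forall>i. i \<le> n \<longrightarrow> finite (W i) \<and> W i \<noteq> {} \<and> (\<forall>w\<in>W i. set w \<subseteq> alphabet A \<and> mrun T (\<nu> i) w = tg i) \<and>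
     (tau T ` (\<Union>w\<in>W i. vis T (\<nu> i) w) = {tau T (\<nu> i)} \<or>
      \<not> rabin_accepting (acc A) (tau T ` (\<Union>w\<in>W i. vis T (\<nu> i) w)))"
    by (metis choice)
  define Vi where "Vi i = (\<Union>w\<in>W i. vis T (\<nu> i) w)" for i
  have seg: "mrun T m (segw \<sigma> a k) = \<nu> k \<and> vis T m (segw \<sigma> a k) = (\<Union>j<k. vis T (\<nu> j) (\<sigma> j)) \<union> {\<nu> k}
      \<and> set (segw \<sigma> a k) \<subseteq> alphabet A"
    if "\<forall>j\<le>n. \<sigma> j \<in> W j" "k \<le> n" for \<sigma> k
    using that(2)
  proof (induction k)
    case 0 then show ?case by (simp add: \<nu>_def)
  next
    case (Suc k)
    then have k: "k < n" by simp
    have sk: "set (\<sigma> k) \<subseteq> alphabet A" "mrun T (\<nu> k) (\<sigma> k) = \<mu> k"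
    proof -
      have sk0: "\<sigma> k \<in> W k" using that(1) k by simp
      have "\<forall>w\<in>W k. set w \<subseteq> alphabet A \<and> mrun T (\<nu> k) w = tg k" using W[rule_format, of k] k by simp
      then show "set (\<sigma> k) \<subseteq> alphabet A" "mrun T (\<nu> k) (\<sigma> k) = \<mu> k"
        using sk0 k by (auto simp: tg_def)
    qed
    have IH: "mrun T m (segw \<sigma> a k) = \<nu> k" "vis T m (segw \<sigma> a k) = (\<Union>j<k. vis T (\<nu> j) (\<sigma> j)) \<union> {\<nu> k}"
      "set (segw \<sigma> a k) \<subseteq> alphabet A" using Suc k by auto
    have nuS: "\<nu> (Suc k) = rho T (\<mu> k) (a k)" by (simp add: \<nu>_def)
    have "mrun T m (segw \<sigma> a (Suc k)) = \<nu> (Suc k)"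
      using IH(1) sk nuS by (simp add: mrun_append mrun_def)
    moreover have "vis T m (segw \<sigma> a (Suc k)) = (\<Union>j<Suc k. vis T (\<nu> j) (\<sigma> j)) \<union> {\<nu> (Suc k)}"
    proof -
      have "vis T m (segw \<sigma> a (Suc k)) = vis T m (segw \<sigma> a k) \<union> vis T (\<nu> k) (\<sigma> k @ [a k])"
        using IH(1) by (simp add: vis_append)
      also have "vis T (\<nu> k) (\<sigma> k @ [a k]) = vis T (\<nu> k) (\<sigma> k) \<union> {\<nu> (Suc k)}"
        using sk nuS by (simp add: vis_snoc)
      finally show ?thesis using IH(2) vis_start[of "\<nu> k" T "\<sigma> k"] by (auto simp: lessThan_Suc)
    qed
    moreover have "set (segw \<sigma> a (Suc k)) \<subseteq> alphabet A" using IH(3) sk a k by auto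
    ultimately show ?case by blast
  qed
  have loop: "loopset A T m (\<Union>j\<le>n. vis T (\<nu> j) (\<sigma> j))" if s: "\<forall>j\<le>n. \<sigma> j \<in> W j" for \<sigma>
  proof -
    have sg: "mrun T m (segw \<sigma> a n) = \<nu> n" "vis T m (segw \<sigma> a n) = (\<Union>j<n. vis T (\<nu> j) (\<sigma> j)) \<union> {\<nu> n}"
      "set (segw \<sigma> a n) \<subseteq> alphabet A" using seg[OF s, of n] by auto
    have sn: "set (\<sigma> n) \<subseteq> alphabet A" "mrun T (\<nu> n) (\<sigma> n) = m"
    proof -
      have sk0: "\<sigma> n \<in> W n" using s by simp
      have "\<forall>w\<in>W n. set w \<subseteq> alphabet A \<and> mrun T (\<nu> n) w = tg n" using W[rule_format, of n] by simp
      then show "set (\<sigma> n) \<subseteq> alphabet A" "mrun T (\<nu> n) (\<sigma> n) = m"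
        using sk0 by (auto simp: tg_def)
    qed
    have "vis T m (segw \<sigma> a n @ \<sigma> n) = (\<Union>j\<le>n. vis T (\<nu> j) (\<sigma> j))"
      using sg vis_start[of "\<nu> n" T "\<sigma> n"] by (auto simp: vis_append lessThan_Suc_atMost[symmetric] lessThan_Suc)
    then show ?thesis unfolding loopset_def using sg sn
      by (intro exI[of _ "segw \<sigma> a n @ \<sigma> n"]) (auto simp: mrun_append)
  qed
  define base where "base j = (SOME w. w \<in> W j)" for j
  have baseW: "base j \<in> W j" if "j \<le> n" for j
    unfolding base_def using W that by (metis ex_in_conv someI_ex)
  define sig where "sig p = (\<lambda>j. if j = fst p then snd p else base j)" for p :: "nat \<times> 'a list"
  define I where "I = Sigma {..n} W"
  have sigW: "\<forall>j\<le>n. sig p j \<in> W j" if "p \<in> I" for p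
    using that baseW by (auto simp: sig_def I_def)
  have finI: "finite I" unfolding I_def using W by (intro finite_SigmaI) auto
  have neI: "I \<noteq> {}"
  proof -
    have "base 0 \<in> W 0" using baseW by simp
    then show ?thesis by (auto simp: I_def)
  qed
  define V where "V = (\<Union>p\<in>I. \<Union>j\<le>n. vis T (\<nu> j) (sig p j))"
  have lV: "loopset A T m V" unfolding V_def
    by (rule loopset_UN[OF finI neI]) (use loop sigW in blast)
  have VVi: "V = (\<Union>j\<le>n. Vi j)"
  proof
    show "V \<subseteq> (\<Union>j\<le>n. Vi j)" unfolding V_def Vi_def using sigW by blast
  next
    show "(\<Union>j\<le>n. Vi j) \<subseteq> V"
    proof
      fix z assume "z \<in> (\<Union>j\<le>n. Vi j)"
      then obtain j w where jw: "j \<le> n" "w \<in> W j" "z \<in> vis T (\<nu> j) w" unfolding Vi_def by auto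
      then have jI: "(j, w) \<in> I" by (simp add: I_def)
      have "sig (j, w) j = w" by (simp add: sig_def)
      then have "z \<in> (\<Union>j'\<le>n. vis T (\<nu> j') (sig (j, w) j'))" using jw by (intro UN_I[of j]) auto
      then show "z \<in> V" unfolding V_def by (rule UN_I[OF jI])
    qed
  qed
  have cV: "c ` {..n} \<subseteq> tau T ` V"
  proof
    fix s assume "s \<in> c ` {..n}"
    then obtain j where j: "j \<le> n" "s = c j" by auto
    have "W j \<noteq> {}" using W[rule_format, OF j(1)] by simp
    then obtain w where w: "w \<in> W j" by blast
    have "\<nu> j \<in> vis T (\<nu> j) w" by (rule vis_start)
    then have "\<nu> j \<in> Vi j" unfolding Vi_def by (rule UN_I[OF w, rotated])
    then have "\<nu> j \<in> V" using VVi j(1) by blast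
    then show "s \<in> tau T ` V" using nu[OF j(1)] j(2) by force
  qed
  have q: "q \<in> tau T ` V" using cV c0 by force
  have RU: "\<forall>s\<in>tau T ` V. \<exists>R\<subseteq>tau T ` V. s \<in> R \<and> \<not> rabin_accepting (acc A) R"
  proof
    fix s assume "s \<in> tau T ` V"
    then obtain j z where jz: "j \<le> n" "z \<in> Vi j" "s = tau T z" using VVi by auto
    have sub: "tau T ` Vi j \<subseteq> tau T ` V" using VVi jz(1) by blast
    show "\<exists>R\<subseteq>tau T ` V. s \<in> R \<and> \<not> rabin_accepting (acc A) R"
    proof (cases "tau T ` Vi j = {tau T (\<nu> j)}")
      case True
      then have "s = c j" using jz nu[OF jz(1)] by auto
      then show ?thesis using cV crej jz(1) by (intro exI[of _ "c ` {..n}"]) auto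
    next
      case False
      then have "\<not> rabin_accepting (acc A) (tau T ` Vi j)" using W jz(1) unfolding Vi_def by blast
      then show ?thesis using sub jz by (intro exI[of _ "tau T ` Vi j"]) auto
    qed
  qed
  show ?thesis using lV q RU by blast
qed


theorem lemma16:
  fixes A :: "('a, 'q) nrw" and B :: "('a, 'p) nbw"
  assumes "GFG_NRW A"
    and "strongly_tight A"
    and "GFG_NBW B"
    and "alphabet B = alphabet A"
    and "buchi_lang B = rabin_lang A"
    and "q \<in> states A"
    and "(E, F) \<in> acc A" and "q \<in> F"
  shows "\<not> (\<exists>qs. rejecting_cycle A qs \<and> q \<in> set qs)"
proof
  assume "\<exists>qs. rejecting_cycle A qs \<and> q \<in> set qs"
  then obtain qs where qs: "rejecting_cycle A qs" "q \<in> set qs" by blast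
  obtain T :: "('a, 'q, nat) transducer" where stw: "strongly_tight_wrt A T"
    using assms(2) unfolding strongly_tight_def by blast
  have tight: "tight_wrt A T" using stw unfolding strongly_tight_wrt_def by simp
  have fsw: "fs_witness A T" using tight unfolding tight_wrt_def by simp
  have wf: "wf_transducer A T" using fsw unfolding fs_witness_def by simp
  have "\<exists>(E, F)\<in>acc A. q \<in> F" using assms(7,8) by blast
  then have "excl_accepting_cycle A T q" using stw assms(6) unfolding strongly_tight_wrt_def by blast
  then obtain D where D: "mcycle A T D" "rabin_accepting (acc_g A T) (set D)"
    "\<not> rabin_accepting (acc_g A T) (set D - {m. tau T m = q})"
    unfolding excl_accepting_cycle_def by blast
  have Dm: "set D \<subseteq> mems T" using D(1) unfolding mcycle_def mpath_def by auto
  have accD: "rabin_accepting (acc A) (tau T ` set D)" using D(2) acc_conv[OF Dm] by blast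
  have "tau T ` (set D - {m. tau T m = q}) = tau T ` set D - {q}" by auto
  then have exD: "\<not> rabin_accepting (acc A) (tau T ` set D - {q})"
    using D(3) acc_conv[of "set D - {m. tau T m = q}" T A] Dm by auto
  obtain m where m: "m \<in> set D" "tau T m = q"
  proof (rule ccontr)
    assume "\<not> thesis"
    with that have "set D - {m. tau T m = q} = set D" by blast
    then show False using D(2,3) by simp
  qed
  have mm: "m \<in> mems T" using m Dm by auto
  have "\<exists>f n. n \<ge> 1 \<and> f 0 = m \<and> f n = m \<and> (\<forall>i<n. (\<lambda>\<mu> \<mu>'. \<exists>a\<in>alphabet A. \<mu>' = rho T \<mu> a) (f i) (f (Suc i))) \<and> f ` {..n} = set D"
    using D(1) m(1) unfolding mcycle_def mpath_def by (intro cyc_rot) auto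
  then obtain f nD where f: "nD \<ge> 1" "f 0 = m" "f nD = m" "\<forall>i<nD. \<exists>a\<in>alphabet A. f (Suc i) = rho T (f i) a"
    "f ` {..nD} = set D" by blast
  obtain x where x: "set x \<subseteq> alphabet A" "length x = nD" "mrun T (f 0) x = f nD" "vis T (f 0) x = f ` {..nD}"
    using path_word[OF f(4)] by blast
  have xne: "x \<noteq> []" using x(2) f(1) by auto
  have qcyc: "is_cycle A qs" "\<not> rabin_accepting (acc A) (set qs)" using qs(1) unfolding rejecting_cycle_def by auto
  have "\<exists>c n. n \<ge> 1 \<and> c 0 = q \<and> c n = q \<and> (\<forall>i<n. (\<lambda>s s'. \<exists>a\<in>alphabet A. s' \<in> delta A s a) (c i) (c (Suc i))) \<and> c ` {..n} = set qs"
    using qcyc(1) qs(2) unfolding is_cycle_def by (intro cyc_rot) auto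
  then obtain c n where c: "n \<ge> 1" "c 0 = q" "c n = q" "\<forall>i<n. \<exists>a\<in>alphabet A. c (Suc i) \<in> delta A (c i) a"
    "c ` {..n} = set qs" by blast
  have cst: "\<forall>i\<le>n. c i \<in> states A" using c(5) qcyc(1) unfolding is_cycle_def by auto
  obtain V where V: "loopset A T m V" "q \<in> tau T ` V"
    "\<forall>s\<in>tau T ` V. \<exists>R\<subseteq>tau T ` V. s \<in> R \<and> \<not> rabin_accepting (acc A) R"
    using rej_loop[OF tight c(1,2,3,4) cst _ mm m(2)] qcyc(2) c(5) by auto
  obtain y where y: "set y \<subseteq> alphabet A" "mrun T m y = m" "vis T m y = V"
    using V(1) unfolding loopset_def by blast
  obtain a0 where a0: "a0 \<in> alphabet A" "c 1 \<in> delta A q a0" using c(1,2,4) by force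
  have "used_by A T q a0 (c 1)" using tight a0 assms(6) unfolding tight_wrt_def by blast
  then obtain u where u: "set u \<subseteq> alphabet A" "q = strat T u" unfolding used_by_def by blast
  define mr where "mr = rho_star T u"
  have mr: "mr \<in> mems T" "tau T mr = q" using u rho_star_mems[OF wf u(1)] by (auto simp: mr_def strat_def)
  obtain p where p: "set p \<subseteq> alphabet A" "rho_star T p = m"
  proof (cases "mr = m")
    case True then show ?thesis using that[of u] u by (simp add: mr_def)
  next
    case False
    have "\<not> replaceable A T m mr" using tight unfolding tight_wrt_def by blast
    then have "mpaths_from_to A T mr m \<noteq> {}" using False mr mm m(2) unfolding replaceable_def by auto
    then obtain ms where ms: "mpath A T ms" "hd ms = mr" "last ms = m" unfolding mpaths_from_to_def by auto
    obtain v where v: "set v \<subseteq> alphabet A" "mrun T mr v = m" using mpath_word[OF ms(1)] ms by auto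
    show ?thesis using that[of "u @ v"] u v by (simp add: mr_def rho_star_mrun mrun_append)
  qed
  have rej: "\<not> rabin_accepting (acc A) (tau T ` (vis T m x \<union> vis T m y))"
  proof -
    have "\<not> rabin_accepting (acc A) (tau T ` set D \<union> tau T ` V)" by (rule rej_union[OF exD V(2,3)])
    moreover have "tau T ` (vis T m x \<union> vis T m y) = tau T ` set D \<union> tau T ` V"
      using x f y by (simp add: image_Un)
    ultimately show ?thesis by simp
  qed
  have accx: "rabin_accepting (acc A) (tau T ` vis T m x)" using accD x f by simp
  show False
    by (rule landweber[OF fsw assms(3,4,5) p x(1) xne _ y(1,2) accx rej]) (use x f in simp)
qed

end
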